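(* Let $P(z,\bar z)=\sum_{j+k\leq n}\alpha_{j,k} z^j\bar z^k$ be an irreducible polyanalytic polynomial such that $|\alpha_{j,k}|\neq|\alpha_{k,j}|$ for some indices $j,k$. Then $P$ has only finitely many zeros in $\mathbb{C}$.
   Context: A polyanalytic polynomial is a function $\mathbb{C}\to\mathbb{C}$ of the form $P(z,\bar z)=\sum_{j+k\le n}\alpha_{j,k} z^j \bar z^{k}$ with complex coefficients (a polynomial in $z$ and $\bar z$); two such polynomials are equal iff all coefficients agree. Its degree is the largest $j+k$ with $\alpha_{j,k}\neq 0$. $P$ is called reducible if $P=P_1P_2$ for polyanalytic polynomials $P_1,P_2$ with $\deg(P_1),\deg(P_2)\geq 1$, and irreducible otherwise. A zero of $P$ is a point $z\in\mathbb{C}$ with $P(z,\bar z)=0$. *)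

theory Defs
  imports Complex_Main "HOL-Computational_Algebra.Polynomial"
begin

text \<open>A polyanalytic polynomial is represented as a bivariate polynomial
  P :: complex poly poly: the outer variable stands for z, the inner one for
  conj z. The coefficient alpha_{j,k} of z^j (conj z)^k is coeff (coeff P j) k.\<close>

definition pa_coeff :: "complex poly poly \<Rightarrow> nat \<Rightarrow> nat \<Rightarrow> complex" where
  "pa_coeff P j k = coeff (coeff P j) k"

definition pa_degree :: "complex poly poly \<Rightarrow> nat" where
  "pa_degree P = (if P = 0 then 0 else Max {j + k | j k. pa_coeff P j k \<noteq> 0})"

definition pa_eval :: "complex poly poly \<Rightarrow> complex \<Rightarrow> complex" where
  "pa_eval P z = (\<Sum>j\<le>degree P. \<Sum>k\<le>degree (coeff P j). pa_coeff P j k * z ^ j * cnj z ^ k)"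

definition pa_reducible :: "complex poly poly \<Rightarrow> bool" where
  "pa_reducible P \<longleftrightarrow> (\<exists>P1 P2. P = P1 * P2 \<and> pa_degree P1 \<ge> 1 \<and> pa_degree P2 \<ge> 1)"

definition pa_irreducible :: "complex poly poly \<Rightarrow> bool" where
  "pa_irreducible P \<longleftrightarrow> \<not> pa_reducible P"

end

theory Submission imports Defs "HOL-Computational_Algebra.Polynomial_Factorial" "HOL-Computational_Algebra.Field_as_Ring" begin

lemma pa_ext: assumes "\<And>j k. pa_coeff A j k = pa_coeff B j k" shows "A = B"
  using assms unfolding pa_coeff_def by (simp add: poly_eq_iff)

lemma pa_coeff_nz: assumes "pa_coeff P j k \<noteq> 0" shows "j \<le> degree P" "k \<le> degree (coeff P j)"
  using assms unfolding pa_coeff_def by (auto intro: le_degree)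

definition bnd :: "complex poly poly \<Rightarrow> nat" where
  "bnd P = degree P + (\<Sum>j\<le>degree P. degree (coeff P j))"

lemma deg_coeff_le_bnd: "degree (coeff P j) \<le> bnd P"
proof (cases "j \<le> degree P")
  case True
  have "degree (coeff P j) \<le> (\<Sum>j\<le>degree P. degree (coeff P j))"
    using True by (intro member_le_sum) auto
  then show ?thesis unfolding bnd_def by simp
next
  case False then show ?thesis by (simp add: coeff_eq_0)
qed

lemma degree_le_bnd: "degree P \<le> bnd P" unfolding bnd_def by simp

lemma pa_coeff_nz_bnd: "pa_coeff P j k \<noteq> 0 \<Longrightarrow> j \<le> bnd P \<and> k \<le> bnd P"
  using pa_coeff_nz[of P j k] deg_coeff_le_bnd[of P j] degree_le_bnd[of P] by linarith

lemma pa_eval_box: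
  assumes "\<And>j k. pa_coeff P j k \<noteq> 0 \<Longrightarrow> j \<le> N \<and> k \<le> N"
  shows "pa_eval P z = (\<Sum>j\<le>N. \<Sum>k\<le>N. pa_coeff P j k * z ^ j * cnj z ^ k)"
proof -
  have lc: "pa_coeff P j (degree (coeff P j)) \<noteq> 0" if "coeff P j \<noteq> 0" for j
    using that unfolding pa_coeff_def by simp
  have degc: "degree (coeff P j) \<le> N" for j
    using assms[OF lc, of j] by (cases "coeff P j = 0") auto
  have degP: "degree P \<le> N"
  proof (cases "P = 0")
    case False
    then have "coeff P (degree P) \<noteq> 0" by simp
    then show ?thesis using assms[OF lc] by blast
  qed simp
  have "pa_eval P z = (\<Sum>j\<le>degree P. \<Sum>k\<le>N. pa_coeff P j k * z ^ j * cnj z ^ k)"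
    unfolding pa_eval_def
  proof (rule sum.cong[OF refl])
    fix j assume "j \<in> {..degree P}"
    show "(\<Sum>k\<le>degree (coeff P j). pa_coeff P j k * z ^ j * cnj z ^ k) =
          (\<Sum>k\<le>N. pa_coeff P j k * z ^ j * cnj z ^ k)"
      using degc[of j] by (intro sum.mono_neutral_left) (auto simp: pa_coeff_def coeff_eq_0)
  qed
  also have "\<dots> = (\<Sum>j\<le>N. \<Sum>k\<le>N. pa_coeff P j k * z ^ j * cnj z ^ k)"
    using degP by (intro sum.mono_neutral_left) (auto simp: pa_coeff_def coeff_eq_0)
  finally show ?thesis .
qed

lemma pa_eval_poly: "pa_eval P z = poly (poly P [:z:]) (cnj z)"
proof -
  have "poly P [:z:] = (\<Sum>j\<le>degree P. coeff P j * [:z:] ^ j)" by (rule poly_altdef)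
  then have "poly (poly P [:z:]) (cnj z) = (\<Sum>j\<le>degree P. poly (coeff P j) (cnj z) * z ^ j)"
    by (simp add: poly_sum poly_power)
  also have "\<dots> = pa_eval P z"
    unfolding pa_eval_def pa_coeff_def
    by (intro sum.cong refl) (simp add: poly_altdef sum_distrib_right sum_distrib_left mult_ac)
  finally show ?thesis by simp
qed

lemma pa_eval_mult: "pa_eval (A*B) z = pa_eval A z * pa_eval B z"
  by (simp add: pa_eval_poly)
lemma pa_eval_add: "pa_eval (A+B) z = pa_eval A z + pa_eval B z"
  by (simp add: pa_eval_poly)
lemma pa_eval_const: "pa_eval [:d:] z = poly d (cnj z)"
  by (simp add: pa_eval_poly)

lemma pa_coeff_mult: "pa_coeff (A*B) j k = (\<Sum>i\<le>j. \<Sum>l\<le>k. pa_coeff A i l * pa_coeff B (j-i) (k-l))"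
  unfolding pa_coeff_def coeff_mult by (simp add: coeff_sum coeff_mult)

definition cs :: "complex poly poly \<Rightarrow> complex poly poly" where
  "cs P = (\<Sum>j\<le>bnd P. monom (\<Sum>k\<le>bnd P. monom (cnj (pa_coeff P k j)) k) j)"

lemma pa_coeff_cs: "pa_coeff (cs P) j k = cnj (pa_coeff P k j)"
proof -
  have "pa_coeff (cs P) j k = (if j \<le> bnd P \<and> k \<le> bnd P then cnj (pa_coeff P k j) else 0)"
    unfolding cs_def pa_coeff_def by (simp add: coeff_sum coeff_monom)
  also have "\<dots> = cnj (pa_coeff P k j)"
    using pa_coeff_nz_bnd[of P k j] by auto
  finally show ?thesis .
qed

lemma cs_cs: "cs (cs P) = P" by (rule pa_ext) (simp add: pa_coeff_cs)

lemma cs_mult: "cs (A * B) = cs A * cs B"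
proof (rule pa_ext)
  fix j k
  show "pa_coeff (cs (A * B)) j k = pa_coeff (cs A * cs B) j k"
    unfolding pa_coeff_cs pa_coeff_mult
    by (simp add: cnj_sum) (subst sum.swap, simp)
qed

lemma pa_eval_cs: "pa_eval (cs P) z = cnj (pa_eval P z)"
proof -
  have "pa_eval (cs P) z = (\<Sum>j\<le>bnd P. \<Sum>k\<le>bnd P. pa_coeff (cs P) j k * z ^ j * cnj z ^ k)"
    by (rule pa_eval_box) (auto simp: pa_coeff_cs dest: pa_coeff_nz_bnd)
  moreover have "pa_eval P z = (\<Sum>j\<le>bnd P. \<Sum>k\<le>bnd P. pa_coeff P j k * z ^ j * cnj z ^ k)"
    by (rule pa_eval_box) (auto dest: pa_coeff_nz_bnd)
  ultimately show ?thesis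
    by (simp add: cnj_sum pa_coeff_cs) (subst sum.swap, simp add: mult_ac)
qed


lemma pa_degree_set_finite: "finite {j + k | j k. pa_coeff P j k \<noteq> 0}"
  by (rule finite_subset[of _ "{..2 * bnd P}"]) (auto dest: pa_coeff_nz_bnd)

lemma pa_degree_ge: "pa_coeff P j k \<noteq> 0 \<Longrightarrow> j + k \<le> pa_degree P"
proof -
  assume a: "pa_coeff P j k \<noteq> 0"
  then have "P \<noteq> 0" by (auto simp: pa_coeff_def)
  then show ?thesis unfolding pa_degree_def using a
    by (auto intro!: Max_ge pa_degree_set_finite)
qed

lemma pa_degree_pos: "degree h > 0 \<Longrightarrow> pa_degree h \<ge> 1"
proof -
  assume a: "degree h > 0"
  then have "h \<noteq> 0" by auto
  then have "pa_coeff h (degree h) (degree (coeff h (degree h))) \<noteq> 0"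
    unfolding pa_coeff_def by simp
  from pa_degree_ge[OF this] a show ?thesis by linarith
qed

lemma pa_degree0_unit: assumes "pa_degree R = 0" "R \<noteq> 0" shows "is_unit R"
proof -
  have z: "pa_coeff R j k = 0" if "j + k > 0" for j k
    using pa_degree_ge[of R j k] that assms(1) by auto
  have R: "R = [:[:pa_coeff R 0 0:]:]"
  proof (rule pa_ext)
    fix j k show "pa_coeff R j k = pa_coeff [:[:pa_coeff R 0 0:]:] j k"
      using z[of j k] by (cases j; cases k) (auto simp: pa_coeff_def)
  qed
  with assms(2) have "pa_coeff R 0 0 \<noteq> 0" by auto
  then show ?thesis by (subst R) (simp add: is_unit_poly_iff dvd_field_iff)
qed


theorem theorem2p9:
  fixes P :: "complex poly poly"
  assumes "pa_irreducible P"
    and "\<exists>j k. norm (pa_coeff P j k) \<noteq> norm (pa_coeff P k j)"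
  shows "finite {z. pa_eval P z = 0}"
proof -
  define Q where "Q = cs P"
  from assms(2) obtain j0 k0 where jk: "norm (pa_coeff P j0 k0) \<noteq> norm (pa_coeff P k0 j0)" by blast
  have Pnz: "P \<noteq> 0" using jk by (auto simp: pa_coeff_def)
  define S where "S = {D. D \<noteq> 0 \<and> (\<exists>a b. D = a * P + b * Q)}"
  have "P = 1 * P + 0 * Q" by simp
  then have "P \<in> S" unfolding S_def using Pnz by blast
  then obtain D where D: "D \<in> S" and Dmin: "\<And>D'. D' \<in> S \<Longrightarrow> degree D \<le> degree D'"
    using ex_has_least_nat[of "\<lambda>D. D \<in> S" P degree] by blast
  from D obtain a b where Dnz: "D \<noteq> 0" and Dab: "D = a * P + b * Q" unfolding S_def by blast
  show ?thesis
  proof (cases "degree D = 0")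
    case True
    define d where "d = coeff D 0"
    have Dd: "D = [:d:]" unfolding d_def using degree_0_id[OF True] by simp
    have dnz: "d \<noteq> 0" using Dnz Dd by auto
    have "{z. pa_eval P z = 0} \<subseteq> cnj ` {x. poly d x = 0}"
    proof
      fix z assume "z \<in> {z. pa_eval P z = 0}"
      then have "pa_eval P z = 0" by simp
      moreover have "pa_eval Q z = cnj (pa_eval P z)" unfolding Q_def by (rule pa_eval_cs)
      ultimately have "pa_eval D z = 0" unfolding Dab by (simp add: pa_eval_add pa_eval_mult)
      then have "poly d (cnj z) = 0" unfolding Dd pa_eval_const .
      then show "z \<in> cnj ` {x. poly d x = 0}" by (intro image_eqI[of _ _ "cnj z"]) auto
    qed
    moreover have "finite {x. poly d x = 0}" using dnz by (rule poly_roots_finite)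
    ultimately show ?thesis by (metis finite_imageI finite_subset)
  next
    case False
    have key: "\<exists>c. c \<noteq> 0 \<and> D dvd smult c F" if F: "F = a' * P + b' * Q" for F a' b'
    proof -
      define r where "r = pseudo_mod F D"
      from pseudo_mod[OF Dnz, of F] obtain c q where cq: "c \<noteq> 0" "smult c F = D * q + r"
        and rdeg: "r = 0 \<or> degree r < degree D" unfolding r_def by blast
      have "r = (smult c a' - q * a) * P + (smult c b' - q * b) * Q"
        using cq(2) unfolding F Dab by (simp add: algebra_simps smult_add_right)
      then have "r = 0" using rdeg Dmin[of r] unfolding S_def by force
      then show ?thesis using cq by auto
    qed
    define h where "h = primitive_part D"
    have ch: "content h = 1" unfolding h_def using Dnz by simp
    have degh: "degree h > 0" unfolding h_def using False by simp
    have hD: "h dvd D" unfolding h_def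
      by (metis content_times_primitive_part dvd_smult dvd_refl)
    have hdvd: "h dvd F" if F: "F = a' * P + b' * Q" for F a' b'
    proof -
      from key[OF F] obtain c where c: "c \<noteq> 0" "D dvd smult c F" by blast
      then have "h dvd smult c F" using hD dvd_trans by blast
      then have "fract_poly h dvd fract_poly (smult c F)" by (rule fract_poly_dvd)
      then have "fract_poly h dvd smult (to_fract c) (fract_poly F)" by simp
      then have "fract_poly h dvd fract_poly F" by (rule dvd_smult_cancel) (use c in simp)
      then show ?thesis using ch by (rule fract_poly_dvdD)
    qed
    have hP: "h dvd P" by (rule hdvd[of P 1 0]) simp
    have hQ: "h dvd Q" by (rule hdvd[of Q 0 1]) simp
    from hP obtain R where PR: "P = h * R" by (elim dvdE)
    have "\<not> pa_reducible P" using assms(1) unfolding pa_irreducible_def .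
    then have "\<not> pa_degree R \<ge> 1" using PR pa_degree_pos[OF degh] unfolding pa_reducible_def by blast
    then have "pa_degree R = 0" by simp
    moreover have "R \<noteq> 0" using PR Pnz by auto
    ultimately have "is_unit R" by (rule pa_degree0_unit)
    then have "P dvd Q" using hQ PR by (simp add: mult_unit_dvd_iff)
    then obtain T where QT: "Q = P * T" by (elim dvdE)
    have "P = cs Q" unfolding Q_def by (simp add: cs_cs)
    also have "\<dots> = Q * cs T" by (metis QT cs_mult Q_def)
    also have "\<dots> = P * (T * cs T)" unfolding QT by (simp add: mult_ac)
    finally have "P * 1 = P * (T * cs T)" by simp
    then have "T * cs T = 1" using Pnz by simp
    then have "is_unit T" by (metis dvdI)
    then obtain u where Tu: "T = [:u:]" "is_unit u" by (auto simp: is_unit_poly_iff)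
    then obtain c where uc0: "u = [:c:]" "is_unit c" using is_unit_poly_iff by blast
    then have uc: "u = [:c:]" "c \<noteq> 0" by auto
    have coef: "cnj (pa_coeff P k j) = c * pa_coeff P j k" for j k
    proof -
      have "cnj (pa_coeff P k j) = pa_coeff Q j k" unfolding Q_def pa_coeff_cs ..
      also have "\<dots> = c * pa_coeff P j k" unfolding QT Tu uc by (simp add: pa_coeff_def)
      finally show ?thesis .
    qed
    define x where "x = norm (pa_coeff P j0 k0)"
    define y where "y = norm (pa_coeff P k0 j0)"
    define t where "t = norm c"
    have 1: "y = t * x" unfolding x_def y_def t_def
      by (metis coef complex_mod_cnj norm_mult)
    have 2: "x = t * y" unfolding x_def y_def t_def
      by (metis coef complex_mod_cnj norm_mult)
    have "x \<noteq> y" using jk unfolding x_def y_def .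
    moreover have "x = (t * t) * x" using 1 2 by (simp add: mult_ac)
    moreover have "t \<ge> 0" unfolding t_def by simp
    ultimately show ?thesis using 1 2
    proof (cases "x = 0")
      case True then show ?thesis using 1 \<open>x \<noteq> y\<close> by simp
    next
      case False
      then have "t * t = 1" using \<open>x = (t * t) * x\<close> by simp
      then have "(t - 1) * (t + 1) = 0" by (simp add: algebra_simps)
      then have "t = 1" using \<open>t \<ge> 0\<close> by auto
      then show ?thesis using 1 \<open>x \<noteq> y\<close> by simp
    qed
  qed
qed

end
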